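(* A finite simple graph $\Delta$ is invariant if and only if (a) every connected component of $\Delta$ is an invariant graph, and (b) no two distinct connected components of $\Delta$ having an odd number of edges are isomorphic.
   Context: A finite simple graph is called invariant if every graph automorphism induces an even permutation of its set of edges. *)

theory Defs
  imports "HOL-Combinatorics.Permutations"
begin

definition simple_graph :: "'a set \<Rightarrow> 'a set set \<Rightarrow> bool" where
  "simple_graph V E \<longleftrightarrow> finite V \<and>
     (\<forall>e\<in>E. \<exists>u v. u \<in> V \<and> v \<in> V \<and> u \<noteq> v \<and> e = {u, v})"

definition graph_aut :: "'a set \<Rightarrow> 'a set set \<Rightarrow> ('a \<Rightarrow> 'a) \<Rightarrow> bool" where
  "graph_aut V E \<sigma> \<longleftrightarrow> \<sigma> permutes V \<and>
     (\<forall>u\<in>V. \<forall>v\<in>V. {u, v} \<in> E \<longleftrightarrow> {\<sigma> u, \<sigma> v} \<in> E)"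

definition edge_perm :: "'a set set \<Rightarrow> ('a \<Rightarrow> 'a) \<Rightarrow> 'a set \<Rightarrow> 'a set" where
  "edge_perm E \<sigma> = (\<lambda>e. if e \<in> E then \<sigma> ` e else e)"

definition invariant_graph :: "'a set \<Rightarrow> 'a set set \<Rightarrow> bool" where
  "invariant_graph V E \<longleftrightarrow> (\<forall>\<sigma>. graph_aut V E \<sigma> \<longrightarrow> evenperm (edge_perm E \<sigma>))"

definition adj :: "'a set set \<Rightarrow> 'a \<Rightarrow> 'a \<Rightarrow> bool" where
  "adj E u v \<longleftrightarrow> {u, v} \<in> E"

definition component :: "'a set \<Rightarrow> 'a set set \<Rightarrow> 'a \<Rightarrow> 'a set" where
  "component V E v = {u \<in> V. (adj E)\<^sup>*\<^sup>* v u}"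

definition components :: "'a set \<Rightarrow> 'a set set \<Rightarrow> 'a set set" where
  "components V E = component V E ` V"

definition edges_on :: "'a set set \<Rightarrow> 'a set \<Rightarrow> 'a set set" where
  "edges_on E C = {e \<in> E. e \<subseteq> C}"

definition graph_iso :: "'a set \<Rightarrow> 'a set set \<Rightarrow> 'b set \<Rightarrow> 'b set set \<Rightarrow> bool" where
  "graph_iso V1 E1 V2 E2 \<longleftrightarrow> (\<exists>f. bij_betw f V1 V2 \<and>
     (\<forall>u\<in>V1. \<forall>v\<in>V1. {u, v} \<in> E1 \<longleftrightarrow> {f u, f v} \<in> E2))"

end

theory Submission imports Defs begin

lemma invol_evenperm:
  fixes h :: "'b \<Rightarrow> 'b"
  assumes "finite A" "\<forall>x. h (h x) = x" "A \<inter> h ` A = {}" "\<forall>x. x \<notin> A \<union> h ` A \<longrightarrow> h x = x"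
  shows "evenperm h \<longleftrightarrow> even (card A)"
  using assms
proof (induction A arbitrary: h rule: finite_induct)
  case empty
  then have "h = id" by auto
  then show ?case by simp
next
  case (insert a A)
  define b where "b = h a"
  have ab: "a \<noteq> b" using insert.prems(2) b_def by auto
  have bA: "b \<notin> A" using insert.prems(2) b_def by auto
  have inv: "h (h x) = x" for x using insert.prems(1) by blast
  define h' where "h' = Transposition.transpose a b \<circ> h"
  have hb: "h b = a" using inv b_def by simp
  have h'a: "h' a = a" using ab hb b_def by (simp add: h'_def)
  have h'b: "h' b = b" using ab hb by (simp add: h'_def)
  have h'x: "h' x = h x" if "x \<noteq> a" "x \<noteq> b" for x
  proof -
    have "h x \<noteq> a" using that hb inv by metis
    moreover have "h x \<noteq> b" using that b_def inv by metis
    ultimately show ?thesis by (simp add: h'_def)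
  qed
  have i1: "\<forall>x. h' (h' x) = x"
  proof
    fix x show "h' (h' x) = x"
    proof (cases "x = a \<or> x = b")
      case True then show ?thesis using h'a h'b by auto
    next
      case False
      then have "h x \<noteq> a" "h x \<noteq> b" using hb b_def inv by metis+
      then show ?thesis using False h'x inv by simp
    qed
  qed
  have imgA: "h' ` A = h ` A" using h'x insert.hyps(2) bA by (metis image_cong)
  have "A \<inter> h ` A \<subseteq> insert a A \<inter> h ` insert a A" by blast
  then have i2: "A \<inter> h' ` A = {}" using imgA insert.prems(2) by simp
  have i3: "\<forall>x. x \<notin> A \<union> h' ` A \<longrightarrow> h' x = x"
  proof (intro allI impI)
    fix x assume x: "x \<notin> A \<union> h' ` A"
    show "h' x = x"
    proof (cases "x = a \<or> x = b")
      case True then show ?thesis using h'a h'b by auto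
    next
      case False
      have hi: "h ` insert a A = insert b (h ` A)" using b_def by simp
      have "x \<notin> insert a A \<union> h ` insert a A" unfolding hi using x imgA False by simp
      then have "h x = x" using insert.prems(3) by blast
      then show ?thesis using h'x False by simp
    qed
  qed
  have IH: "evenperm h' \<longleftrightarrow> even (card A)" using insert.IH i1 i2 i3 by blast
  have hh': "h = Transposition.transpose a b \<circ> h'"
    unfolding h'_def by (auto simp: fun_eq_iff)
  have "bij h'" using i1 by (metis o_bij comp_apply eq_id_iff)
  moreover have "finite (A \<union> h' ` A)" using insert.hyps by simp
  ultimately have "permutation h'" using i3 permutation_lemma by blast
  then have "evenperm h \<longleftrightarrow> \<not> evenperm h'"
    using hh' evenperm_comp[OF permutation_swap_id] evenperm_swap ab by metis
  then show ?case using IH insert.hyps by simp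
qed

locale sg =
  fixes V :: "'a set" and E :: "'a set set"
  assumes sg: "simple_graph V E"
begin

abbreviation "cc \<equiv> component V E"

lemma finV: "finite V" using sg by (simp add: simple_graph_def)

lemma E_form: "e \<in> E \<Longrightarrow> \<exists>u v. u \<in> V \<and> v \<in> V \<and> u \<noteq> v \<and> e = {u, v}"
  using sg by (simp add: simple_graph_def)

lemma E_sub: "e \<in> E \<Longrightarrow> e \<subseteq> V"
proof -
  assume "e \<in> E"
  then obtain u v where "u \<in> V" "v \<in> V" "e = {u, v}" using E_form by blast
  then show ?thesis by simp
qed

lemma finE: "finite E"
proof -
  have "E \<subseteq> Pow V" using E_sub by blast
  then show ?thesis using finite_subset finV by (metis finite_Pow_iff)
qed

lemma E_ne: "e \<in> E \<Longrightarrow> e \<noteq> {}"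
proof -
  assume "e \<in> E"
  then obtain u v where "e = {u, v}" using E_form by blast
  then show ?thesis by simp
qed

lemma adj_V: "adj E u v \<Longrightarrow> u \<in> V \<and> v \<in> V"
  unfolding adj_def using E_sub by blast

lemma adj_sym: "adj E u v \<Longrightarrow> adj E v u"
  unfolding adj_def by (simp add: insert_commute)

lemma rt_sym: "(adj E)\<^sup>*\<^sup>* u v \<Longrightarrow> (adj E)\<^sup>*\<^sup>* v u"
proof (induction rule: rtranclp_induct)
  case base then show ?case by simp
next
  case (step y z)
  then show ?case using adj_sym by (meson converse_rtranclp_into_rtranclp)
qed

lemma comp_self: "x \<in> V \<Longrightarrow> x \<in> cc x"
  by (simp add: component_def)

lemma comp_sub: "cc x \<subseteq> V" by (auto simp: component_def)

lemma comp_eq: "y \<in> cc x \<Longrightarrow> cc y = cc x"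
proof -
  assume "y \<in> cc x"
  then have xy: "(adj E)\<^sup>*\<^sup>* x y" by (simp add: component_def)
  then have yx: "(adj E)\<^sup>*\<^sup>* y x" by (rule rt_sym)
  have "(adj E)\<^sup>*\<^sup>* y z \<longleftrightarrow> (adj E)\<^sup>*\<^sup>* x z" for z
    using xy yx by (meson rtranclp_trans)
  then show ?thesis by (simp add: component_def)
qed

lemma comp_disj: "cc x \<noteq> cc y \<Longrightarrow> cc x \<inter> cc y = {}"
proof (rule ccontr)
  assume ne: "cc x \<noteq> cc y" and "cc x \<inter> cc y \<noteq> {}"
  then obtain z where z1: "z \<in> cc x" and z2: "z \<in> cc y" by blast
  have "cc z = cc x" using z1 by (rule comp_eq)
  moreover have "cc z = cc y" using z2 by (rule comp_eq)
  ultimately show False using ne by simp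
qed

lemma comp_same: "y \<in> cc x \<Longrightarrow> z \<in> cc x \<Longrightarrow> cc y = cc z"
proof -
  assume a: "y \<in> cc x" and b: "z \<in> cc x"
  have "cc y = cc x" using a by (rule comp_eq)
  moreover have "cc z = cc x" using b by (rule comp_eq)
  ultimately show ?thesis by simp
qed

lemma edge_comp: "{u, v} \<in> E \<Longrightarrow> v \<in> cc u"
proof -
  assume h: "{u, v} \<in> E"
  then have a: "adj E u v" by (simp add: adj_def)
  then have "v \<in> V" using adj_V by blast
  moreover have "(adj E)\<^sup>*\<^sup>* u v" using a by (rule r_into_rtranclp)
  ultimately show ?thesis unfolding component_def by simp
qed

lemma edge_in_comp: "e \<in> E \<Longrightarrow> u \<in> e \<Longrightarrow> e \<subseteq> cc u"
proof -
  assume e: "e \<in> E" and u: "u \<in> e"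
  obtain a b where ab: "a \<in> V" "b \<in> V" "e = {a, b}" using E_form e by blast
  have bc: "b \<in> cc a" using e ab edge_comp by blast
  have ac: "a \<in> cc a" using ab comp_self by blast
  have "u \<in> cc a" using u ab bc ac by blast
  then have "cc u = cc a" by (rule comp_eq)
  moreover have "e \<subseteq> cc a" using ab bc ac by simp
  ultimately show ?thesis by simp
qed

lemma aut_perm: "graph_aut V E \<sigma> \<Longrightarrow> \<sigma> permutes V" by (simp add: graph_aut_def)

lemma aut_edge: "graph_aut V E \<sigma> \<Longrightarrow> e \<in> E \<Longrightarrow> \<sigma> ` e \<in> E"
proof -
  assume a: "graph_aut V E \<sigma>" and e: "e \<in> E"
  obtain u v where "u \<in> V" "v \<in> V" "e = {u, v}" using E_form e by blast
  then show ?thesis using a e unfolding graph_aut_def by auto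
qed

lemma aut_inv: "graph_aut V E \<sigma> \<Longrightarrow> graph_aut V E (inv \<sigma>)"
proof -
  assume a: "graph_aut V E \<sigma>"
  then have p: "\<sigma> permutes V" by (simp add: graph_aut_def)
  have "inv \<sigma> permutes V" using p permutes_inv by blast
  moreover have "{u, v} \<in> E \<longleftrightarrow> {inv \<sigma> u, inv \<sigma> v} \<in> E" if "u \<in> V" "v \<in> V" for u v
  proof -
    have "inv \<sigma> u \<in> V" "inv \<sigma> v \<in> V" using that permutes_in_image[OF permutes_inv[OF p]] by auto
    then have "{inv \<sigma> u, inv \<sigma> v} \<in> E \<longleftrightarrow> {\<sigma> (inv \<sigma> u), \<sigma> (inv \<sigma> v)} \<in> E"
      using a by (simp add: graph_aut_def)
    then show ?thesis using permutes_inverses(1)[OF p] by simp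
  qed
  ultimately show ?thesis by (simp add: graph_aut_def)
qed

lemma aut_o: "graph_aut V E \<sigma> \<Longrightarrow> graph_aut V E \<tau> \<Longrightarrow> graph_aut V E (\<sigma> \<circ> \<tau>)"
proof -
  assume a: "graph_aut V E \<sigma>" and b: "graph_aut V E \<tau>"
  have "(\<sigma> \<circ> \<tau>) permutes V" using a b permutes_compose by (auto simp: graph_aut_def)
  moreover have "{u, v} \<in> E \<longleftrightarrow> {\<sigma> (\<tau> u), \<sigma> (\<tau> v)} \<in> E" if "u \<in> V" "v \<in> V" for u v
  proof -
    have "\<tau> u \<in> V" "\<tau> v \<in> V" using that b aut_perm permutes_in_image by metis+
    then show ?thesis using that a b by (simp add: graph_aut_def)
  qed
  ultimately show ?thesis by (simp add: graph_aut_def)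
qed

lemma aut_adj: "graph_aut V E \<sigma> \<Longrightarrow> adj E u v \<Longrightarrow> adj E (\<sigma> u) (\<sigma> v)"
  using adj_V unfolding graph_aut_def adj_def by blast

lemma aut_rt: "graph_aut V E \<sigma> \<Longrightarrow> (adj E)\<^sup>*\<^sup>* u v \<Longrightarrow> (adj E)\<^sup>*\<^sup>* (\<sigma> u) (\<sigma> v)"
proof -
  assume a: "graph_aut V E \<sigma>"
  show "(adj E)\<^sup>*\<^sup>* u v \<Longrightarrow> (adj E)\<^sup>*\<^sup>* (\<sigma> u) (\<sigma> v)"
  proof (induction rule: rtranclp_induct)
    case base then show ?case by simp
  next
    case (step y z) then show ?case using aut_adj[OF a] by (meson rtranclp.rtrancl_into_rtrancl)
  qed
qed

lemma aut_comp_sub: "graph_aut V E \<sigma> \<Longrightarrow> \<sigma> ` cc x \<subseteq> cc (\<sigma> x)"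
proof
  fix w assume a: "graph_aut V E \<sigma>" and "w \<in> \<sigma> ` cc x"
  then obtain z where z: "z \<in> cc x" "w = \<sigma> z" by blast
  then have "z \<in> V" "(adj E)\<^sup>*\<^sup>* x z" by (auto simp: component_def)
  then have "\<sigma> z \<in> V" "(adj E)\<^sup>*\<^sup>* (\<sigma> x) (\<sigma> z)"
    using a aut_rt aut_perm permutes_in_image by metis+
  then show "w \<in> cc (\<sigma> x)" using z by (simp add: component_def)
qed

lemma aut_comp_image: "graph_aut V E \<sigma> \<Longrightarrow> \<sigma> ` cc x = cc (\<sigma> x)"
proof -
  assume a: "graph_aut V E \<sigma>"
  have p: "\<sigma> permutes V" using a aut_perm by blast
  have "inv \<sigma> ` cc (\<sigma> x) \<subseteq> cc (inv \<sigma> (\<sigma> x))" using aut_comp_sub aut_inv a by blast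
  then have "inv \<sigma> ` cc (\<sigma> x) \<subseteq> cc x" using permutes_inverses(2)[OF p] by simp
  then have "\<sigma> ` inv \<sigma> ` cc (\<sigma> x) \<subseteq> \<sigma> ` cc x" by blast
  then have "cc (\<sigma> x) \<subseteq> \<sigma> ` cc x"
    using permutes_inverses(1)[OF p] by (simp add: image_comp)
  then show ?thesis using aut_comp_sub[OF a] by blast
qed

lemma edge_perm_o: "graph_aut V E \<tau> \<Longrightarrow> edge_perm E (\<sigma> \<circ> \<tau>) = edge_perm E \<sigma> \<circ> edge_perm E \<tau>"
proof
  fix e assume a: "graph_aut V E \<tau>"
  show "edge_perm E (\<sigma> \<circ> \<tau>) e = (edge_perm E \<sigma> \<circ> edge_perm E \<tau>) e"
  proof (cases "e \<in> E")
    case True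
    then have "\<tau> ` e \<in> E" using a aut_edge by blast
    then show ?thesis using True by (simp add: edge_perm_def image_comp)
  qed (simp add: edge_perm_def)
qed

lemma edge_perm_permutes: "graph_aut V E \<sigma> \<Longrightarrow> edge_perm E \<sigma> permutes E"
proof -
  assume a: "graph_aut V E \<sigma>"
  have "inj \<sigma>" using a aut_perm permutes_inj by blast
  then have "inj_on (edge_perm E \<sigma>) E" unfolding edge_perm_def inj_on_def
    by (metis inj_image_eq_iff \<open>inj \<sigma>\<close>)
  then show ?thesis
    by (rule inj_imp_permutes) (auto simp: finE edge_perm_def aut_edge a)
qed

lemma edge_perm_permutation: "graph_aut V E \<sigma> \<Longrightarrow> permutation (edge_perm E \<sigma>)"
  using edge_perm_permutes finE permutes_imp_permutation by blast

lemma aut_id: "graph_aut V E id"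
  by (simp add: graph_aut_def permutes_id)

lemma edge_perm_id: "edge_perm E id = id"
  by (simp add: edge_perm_def fun_eq_iff)

lemma comp_other: "x \<in> V \<Longrightarrow> y \<in> V \<Longrightarrow> y \<notin> cc x \<Longrightarrow> cc y \<inter> cc x = {}"
proof -
  assume "x \<in> V" "y \<in> V" "y \<notin> cc x"
  then have "cc y \<noteq> cc x" using comp_self by blast
  then show ?thesis by (rule comp_disj)
qed

lemma fix_out: "f permutes C \<Longrightarrow> A \<inter> C = {} \<Longrightarrow> y \<in> A \<Longrightarrow> f y = y"
proof -
  assume p: "f permutes C" and d: "A \<inter> C = {}" and y: "y \<in> A"
  have "y \<notin> C" using d y by blast
  then show "f y = y" using p by (simp add: permutes_not_in)
qed

lemma piecewise_core:
  assumes p: "f permutes V"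
    and img: "\<forall>x\<in>V. f ` cc x = cc (f x)"
    and loc: "\<forall>x\<in>V. \<forall>u\<in>cc x. \<forall>v\<in>cc x. ({u, v} \<in> E \<longleftrightarrow> {f u, f v} \<in> E)"
  shows "graph_aut V E f"
  unfolding graph_aut_def
proof (intro conjI p ballI)
  fix u v assume u: "u \<in> V" and v: "v \<in> V"
  show "{u, v} \<in> E \<longleftrightarrow> {f u, f v} \<in> E"
  proof (cases "v \<in> cc u")
    case True
    then show ?thesis using loc u comp_self by blast
  next
    case False
    then have n1: "{u, v} \<notin> E" using edge_comp by blast
    have "{f u, f v} \<notin> E"
    proof
      assume "{f u, f v} \<in> E"
      then have "f v \<in> cc (f u)" by (rule edge_comp)
      then have "cc (f v) = cc (f u)" by (rule comp_eq)
      then have "f ` cc v = f ` cc u" using img u v by simp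
      moreover have "inj f" using p permutes_inj by blast
      ultimately have "cc v = cc u" by (simp add: inj_image_eq_iff)
      then show False using False v comp_self by blast
    qed
    then show ?thesis using n1 by simp
  qed
qed

lemma piecewise_aut:
  assumes p: "f permutes V"
    and h: "\<forall>x\<in>V. \<exists>g. graph_aut V E g \<and> (\<forall>y\<in>cc x. f y = g y)"
  shows "graph_aut V E f"
proof (rule piecewise_core[OF p])
  show "\<forall>x\<in>V. f ` cc x = cc (f x)"
  proof
    fix x assume x: "x \<in> V"
    then obtain g where g: "graph_aut V E g" "\<forall>y\<in>cc x. f y = g y" using h by blast
    have "f ` cc x = g ` cc x" by (rule image_cong[OF refl]) (use g(2) in blast)
    also have "\<dots> = cc (g x)" using g(1) aut_comp_image by blast
    also have "g x = f x" using g(2) x comp_self by metis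
    finally show "f ` cc x = cc (f x)" .
  qed
  show "\<forall>x\<in>V. \<forall>u\<in>cc x. \<forall>v\<in>cc x. ({u, v} \<in> E \<longleftrightarrow> {f u, f v} \<in> E)"
  proof (intro ballI)
    fix x u v assume x: "x \<in> V" and u: "u \<in> cc x" and v: "v \<in> cc x"
    obtain g where g: "graph_aut V E g" "\<forall>y\<in>cc x. f y = g y" using h x by blast
    have "u \<in> V" "v \<in> V" using u v comp_sub by auto
    then have "{u, v} \<in> E \<longleftrightarrow> {g u, g v} \<in> E" using g(1) by (simp add: graph_aut_def)
    then show "{u, v} \<in> E \<longleftrightarrow> {f u, f v} \<in> E" using g(2) u v by simp
  qed
qed

lemma restr_edge_perm:
  assumes a: "graph_aut V E \<rho>" and p: "\<rho> permutes C" and C: "C = cc x" and x: "x \<in> V"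
  shows "edge_perm E \<rho> = edge_perm (edges_on E C) \<rho>"
proof
  fix e
  show "edge_perm E \<rho> e = edge_perm (edges_on E C) \<rho> e"
  proof (cases "e \<in> E \<and> \<not> e \<subseteq> C")
    case True
    then obtain u where u: "u \<in> e" using E_ne by blast
    have eu: "e \<subseteq> cc u" using True u edge_in_comp by blast
    have uV: "u \<in> V" using True u E_sub by blast
    have "u \<notin> C"
    proof
      assume "u \<in> C"
      then have "cc u = cc x" using C comp_eq[of u x] by simp
      then show False using True eu C by simp
    qed
    then have "cc u \<inter> C = {}" using comp_other x uV C by blast
    then have d: "e \<inter> C = {}" using eu by blast
    have "\<forall>y\<in>e. \<rho> y = y" using fix_out[OF p d] by blast
    then have "\<rho> ` e = e" by simp
    then show ?thesis using True by (simp add: edge_perm_def edges_on_def)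
  next
    case False
    then show ?thesis by (auto simp: edge_perm_def edges_on_def)
  qed
qed

lemma restr_aut:
  assumes a: "graph_aut V E \<rho>" and p: "\<rho> permutes C" and C: "C = cc x"
  shows "graph_aut C (edges_on E C) \<rho>"
  unfolding graph_aut_def
proof (intro conjI p ballI)
  fix u v assume u: "u \<in> C" and v: "v \<in> C"
  have "\<rho> u \<in> C" "\<rho> v \<in> C" using u v p permutes_in_image by metis+
  moreover have "u \<in> V" "v \<in> V" using u v C comp_sub by auto
  ultimately show "{u, v} \<in> edges_on E C \<longleftrightarrow> {\<rho> u, \<rho> v} \<in> edges_on E C"
    using a u v by (simp add: edges_on_def graph_aut_def)
qed

lemma ext_aut:
  assumes x: "x \<in> V" and C: "C = cc x" and a: "graph_aut C (edges_on E C) \<sigma>"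
  shows "graph_aut V E \<sigma>"
proof -
  have pC: "\<sigma> permutes C" using a by (simp add: graph_aut_def)
  have pV: "\<sigma> permutes V" using pC comp_sub C permutes_subset by blast
  show "graph_aut V E \<sigma>"
  proof (rule piecewise_core[OF pV])
    show "\<forall>w\<in>V. \<sigma> ` cc w = cc (\<sigma> w)"
    proof
      fix w assume w: "w \<in> V"
      show "\<sigma> ` cc w = cc (\<sigma> w)"
      proof (cases "w \<in> C")
        case True
        then have c1: "cc w = C" using C comp_eq[of w x] by simp
        have "\<sigma> w \<in> C" using True pC permutes_in_image by metis
        then have "cc (\<sigma> w) = C" using C comp_eq[of "\<sigma> w" x] by simp
        then show ?thesis using c1 pC permutes_image by metis
      next
        case False
        then have "cc w \<inter> C = {}" using comp_other x w C by blast
        then have "\<forall>z\<in>cc w. \<sigma> z = z" using fix_out[OF pC] by blast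
        then show ?thesis using w comp_self by simp
      qed
    qed
    show "\<forall>w\<in>V. \<forall>u\<in>cc w. \<forall>v\<in>cc w. ({u, v} \<in> E \<longleftrightarrow> {\<sigma> u, \<sigma> v} \<in> E)"
    proof (intro ballI)
      fix w u v assume w: "w \<in> V" and u: "u \<in> cc w" and v: "v \<in> cc w"
      show "{u, v} \<in> E \<longleftrightarrow> {\<sigma> u, \<sigma> v} \<in> E"
      proof (cases "w \<in> C")
        case True
        then have "cc w = C" using C comp_eq[of w x] by simp
        then have uC: "u \<in> C" and vC: "v \<in> C" using u v by auto
        then have "\<sigma> u \<in> C" "\<sigma> v \<in> C" using pC permutes_in_image by metis+
        then show ?thesis using a uC vC by (simp add: edges_on_def graph_aut_def)
      next
        case False
        then have "cc w \<inter> C = {}" using comp_other x w C by blast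
        then have "\<sigma> u = u" "\<sigma> v = v" using u v fix_out[OF pC] by blast+
        then show ?thesis by simp
      qed
    qed
  qed
qed

lemma swap:
  assumes x1: "x1 \<in> V" and x2: "x2 \<in> V" and C1: "C1 = cc x1" and C2: "C2 = cc x2"
    and ne: "C1 \<noteq> C2" and bij: "bij_betw f C1 C2"
    and fe: "\<forall>u\<in>C1. \<forall>v\<in>C1. ({u, v} \<in> E \<longleftrightarrow> {f u, f v} \<in> E)"
    and tau: "\<tau> = (\<lambda>y. if y \<in> C1 then f y else if y \<in> C2 then inv_into C1 f y else y)"
  shows "graph_aut V E \<tau> \<and> (\<forall>y. \<tau> (\<tau> y) = y)
    \<and> (evenperm (edge_perm E \<tau>) \<longleftrightarrow> even (card (edges_on E C1)))
    \<and> card (edges_on E C2) = card (edges_on E C1)"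
proof -
  define g where "g = inv_into C1 f"
  have disj: "C1 \<inter> C2 = {}" using ne unfolding C1 C2 by (rule comp_disj)
  have bijg: "bij_betw g C2 C1" unfolding g_def using bij by (rule bij_betw_inv_into)
  have f1: "f y \<in> C2" if "y \<in> C1" for y using bij that by (rule bij_betw_apply)
  have g2: "g y \<in> C1" if "y \<in> C2" for y using bijg that by (rule bij_betw_apply)
  have gf: "g (f y) = y" if "y \<in> C1" for y unfolding g_def using bij that by (rule bij_betw_inv_into_left)
  have fg: "f (g y) = y" if "y \<in> C2" for y unfolding g_def using bij that by (rule bij_betw_inv_into_right)
  have t1: "\<tau> y = f y" if "y \<in> C1" for y using that tau by simp
  have t2: "\<tau> y = g y" if "y \<in> C2" for y using that tau disj g_def by auto
  have t3: "\<tau> y = y" if "y \<notin> C1" "y \<notin> C2" for y using that tau by simp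
  have tt: "\<tau> (\<tau> y) = y" for y
  proof (cases "y \<in> C1")
    case True
    then show ?thesis using t1 t2 f1 gf by simp
  next
    case False
    show ?thesis
    proof (cases "y \<in> C2")
      case True
      then show ?thesis using False t1 t2 g2 fg by simp
    next
      case False2: False
      then show ?thesis using False t3 by simp
    qed
  qed
  have C1V: "C1 \<subseteq> V" and C2V: "C2 \<subseteq> V" using C1 C2 comp_sub by auto
  have tV: "\<tau> y \<in> V" if "y \<in> V" for y
  proof (cases "y \<in> C1")
    case True then show ?thesis using t1 f1 C2V by auto
  next
    case False
    then show ?thesis using that t2 g2 t3 C1V by (cases "y \<in> C2") auto
  qed
  have tout: "\<tau> y = y" if "y \<notin> V" for y using that t3 C1V C2V by blast
  have injt: "inj_on \<tau> V" by (rule inj_on_inverseI[where g=\<tau>]) (rule tt)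
  have pt: "\<tau> permutes V" using injt finV tV tout by (rule inj_imp_permutes)
  have fC1: "f ` C1 = C2" using bij by (simp add: bij_betw_def)
  have gC2: "g ` C2 = C1" using bijg by (simp add: bij_betw_def)
  have "\<tau> ` C1 = f ` C1" by (rule image_cong[OF refl]) (rule t1)
  then have tC1: "\<tau> ` C1 = C2" using fC1 by simp
  have "\<tau> ` C2 = g ` C2" by (rule image_cong[OF refl]) (rule t2)
  then have tC2: "\<tau> ` C2 = C1" using gC2 by simp
  have a: "graph_aut V E \<tau>"
  proof (rule piecewise_core[OF pt])
    show "\<forall>w\<in>V. \<tau> ` cc w = cc (\<tau> w)"
    proof
      fix w assume w: "w \<in> V"
      show "\<tau> ` cc w = cc (\<tau> w)"
      proof (cases "w \<in> C1")
        case True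
        then have c: "cc w = C1" using C1 comp_eq[of w x1] by simp
        have "\<tau> w \<in> C2" using True t1 f1 by simp
        then have "cc (\<tau> w) = C2" using C2 comp_eq[of "\<tau> w" x2] by simp
        then show ?thesis using c tC1 by simp
      next
        case F1: False
        show ?thesis
        proof (cases "w \<in> C2")
          case True
          then have c: "cc w = C2" using C2 comp_eq[of w x2] by simp
          have "\<tau> w \<in> C1" using True t2 g2 by simp
          then have "cc (\<tau> w) = C1" using C1 comp_eq[of "\<tau> w" x1] by simp
          then show ?thesis using c tC2 by simp
        next
          case F2: False
          have d1: "cc w \<inter> C1 = {}" using comp_other[OF x1 w] F1 C1 by simp
          have d2: "cc w \<inter> C2 = {}" using comp_other[OF x2 w] F2 C2 by simp
          have "\<forall>z\<in>cc w. \<tau> z = z"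
          proof
            fix z assume "z \<in> cc w"
            then have "z \<notin> C1" "z \<notin> C2" using d1 d2 by blast+
            then show "\<tau> z = z" by (rule t3)
          qed
          then show ?thesis using w comp_self by simp
        qed
      qed
    qed
    show "\<forall>w\<in>V. \<forall>u\<in>cc w. \<forall>v\<in>cc w. ({u, v} \<in> E \<longleftrightarrow> {\<tau> u, \<tau> v} \<in> E)"
    proof (intro ballI)
      fix w u v assume w: "w \<in> V" and u: "u \<in> cc w" and v: "v \<in> cc w"
      show "{u, v} \<in> E \<longleftrightarrow> {\<tau> u, \<tau> v} \<in> E"
      proof (cases "w \<in> C1")
        case True
        then have c: "cc w = C1" using C1 comp_eq[of w x1] by simp
        then have uC: "u \<in> C1" and vC: "v \<in> C1" using u v by auto
        have "{u, v} \<in> E \<longleftrightarrow> {f u, f v} \<in> E" using fe uC vC by blast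
        then show ?thesis using t1[OF uC] t1[OF vC] by simp
      next
        case F1: False
        show ?thesis
        proof (cases "w \<in> C2")
          case True
          then have c: "cc w = C2" using C2 comp_eq[of w x2] by simp
          then have uC: "u \<in> C2" and vC: "v \<in> C2" using u v by auto
          have "{g u, g v} \<in> E \<longleftrightarrow> {f (g u), f (g v)} \<in> E" using fe g2[OF uC] g2[OF vC] by blast
          then show ?thesis using fg[OF uC] fg[OF vC] t2[OF uC] t2[OF vC] by simp
        next
          case F2: False
          have d1: "cc w \<inter> C1 = {}" using comp_other[OF x1 w] F1 C1 by simp
          have d2: "cc w \<inter> C2 = {}" using comp_other[OF x2 w] F2 C2 by simp
          have "u \<notin> C1" "u \<notin> C2" "v \<notin> C1" "v \<notin> C2" using u v d1 d2 by blast+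
          then show ?thesis using t3 by simp
        qed
      qed
    qed
  qed
  define h where "h = edge_perm E \<tau>"
  define A where "A = edges_on E C1"
  define B where "B = edges_on E C2"
  have hh: "h (h e) = e" for e
  proof -
    have "\<tau> \<circ> \<tau> = id" using tt by (simp add: fun_eq_iff)
    then have "edge_perm E (\<tau> \<circ> \<tau>) = id" using edge_perm_id by simp
    then have "h \<circ> h = id" unfolding h_def using edge_perm_o[OF a] by simp
    then have "(h \<circ> h) e = id e" by simp
    then show ?thesis by simp
  qed
  have hA: "h e \<in> B" if "e \<in> A" for e
  proof -
    have eE: "e \<in> E" and eC: "e \<subseteq> C1" using that by (auto simp: A_def edges_on_def)
    have "h e = \<tau> ` e" using eE by (simp add: h_def edge_perm_def)
    moreover have "\<tau> ` e \<in> E" using a eE by (rule aut_edge)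
    moreover have "\<tau> ` e \<subseteq> C2" using eC tC1 by blast
    ultimately show ?thesis by (simp add: B_def edges_on_def)
  qed
  have hB: "h e \<in> A" if "e \<in> B" for e
  proof -
    have eE: "e \<in> E" and eC: "e \<subseteq> C2" using that by (auto simp: B_def edges_on_def)
    have "h e = \<tau> ` e" using eE by (simp add: h_def edge_perm_def)
    moreover have "\<tau> ` e \<in> E" using a eE by (rule aut_edge)
    moreover have "\<tau> ` e \<subseteq> C1" using eC tC2 by blast
    ultimately show ?thesis by (simp add: A_def edges_on_def)
  qed
  have AB: "A \<inter> B = {}"
  proof (rule ccontr)
    assume "A \<inter> B \<noteq> {}"
    then obtain e where "e \<in> A" "e \<in> B" by blast
    then have "e \<in> E" "e \<subseteq> C1" "e \<subseteq> C2" by (auto simp: A_def B_def edges_on_def)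
    then show False using disj E_ne by blast
  qed
  have hAB: "h ` A = B"
  proof
    show "h ` A \<subseteq> B" using hA by blast
    show "B \<subseteq> h ` A"
    proof
      fix e assume "e \<in> B"
      then have "h e \<in> A" "h (h e) = e" using hB hh by simp_all
      then show "e \<in> h ` A" by (metis imageI)
    qed
  qed
  have fix_h: "\<forall>e. e \<notin> A \<union> h ` A \<longrightarrow> h e = e"
  proof (intro allI impI)
    fix e assume e: "e \<notin> A \<union> h ` A"
    show "h e = e"
    proof (cases "e \<in> E")
      case False then show ?thesis by (simp add: h_def edge_perm_def)
    next
      case True
      then obtain u where ue: "u \<in> e" using E_ne by blast
      have eu: "e \<subseteq> cc u" using True ue edge_in_comp by blast
      have uV: "u \<in> V" using True ue E_sub by blast
      have u1: "u \<notin> C1"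
      proof
        assume "u \<in> C1"
        then have "cc u = C1" using C1 comp_eq[of u x1] by simp
        then have "e \<in> A" using eu True by (simp add: A_def edges_on_def)
        then show False using e by simp
      qed
      have u2: "u \<notin> C2"
      proof
        assume "u \<in> C2"
        then have "cc u = C2" using C2 comp_eq[of u x2] by simp
        then have "e \<in> B" using eu True by (simp add: B_def edges_on_def)
        then show False using e hAB by simp
      qed
      have d1: "cc u \<inter> C1 = {}" using comp_other[OF x1 uV] u1 C1 by simp
      have d2: "cc u \<inter> C2 = {}" using comp_other[OF x2 uV] u2 C2 by simp
      have "\<forall>z\<in>e. \<tau> z = z"
      proof
        fix z assume "z \<in> e"
        then have "z \<notin> C1" "z \<notin> C2" using eu d1 d2 by blast+
        then show "\<tau> z = z" by (rule t3)
      qed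
      then have "\<tau> ` e = e" by simp
      then show ?thesis using True by (simp add: h_def edge_perm_def)
    qed
  qed
  have finA: "finite A" using finE by (simp add: A_def edges_on_def)
  have ev: "evenperm h \<longleftrightarrow> even (card A)"
  proof (rule invol_evenperm[OF finA])
    show "\<forall>x. h (h x) = x" using hh by blast
    show "A \<inter> h ` A = {}" using AB hAB by simp
    show "\<forall>x. x \<notin> A \<union> h ` A \<longrightarrow> h x = x" by (rule fix_h)
  qed
  have "inj_on h A" by (rule inj_on_inverseI[where g=h]) (rule hh)
  then have "card B = card A" using card_image[OF \<open>inj_on h A\<close>] hAB by simp
  then show ?thesis using a tt ev by (simp add: h_def A_def B_def)
qed

lemma comps_E: "C \<in> components V E \<Longrightarrow> \<exists>x\<in>V. C = cc x"
  by (auto simp: components_def)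

lemma comps_I: "x \<in> V \<Longrightarrow> cc x \<in> components V E"
  by (simp add: components_def)

lemma fwd_a:
  assumes inv: "invariant_graph V E" and C: "C \<in> components V E"
  shows "invariant_graph C (edges_on E C)"
  unfolding invariant_graph_def
proof (intro allI impI)
  fix \<sigma> assume a: "graph_aut C (edges_on E C) \<sigma>"
  obtain x where x: "x \<in> V" and Cx: "C = cc x" using comps_E[OF C] by blast
  have aV: "graph_aut V E \<sigma>" using x Cx a by (rule ext_aut)
  have pC: "\<sigma> permutes C" using a by (simp add: graph_aut_def)
  have "evenperm (edge_perm E \<sigma>)" using inv aV by (simp add: invariant_graph_def)
  moreover have "edge_perm E \<sigma> = edge_perm (edges_on E C) \<sigma>"
    using aV pC Cx x by (rule restr_edge_perm)
  ultimately show "evenperm (edge_perm (edges_on E C) \<sigma>)" by simp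
qed

lemma fwd_b:
  assumes inv: "invariant_graph V E" and C1: "C1 \<in> components V E" and C2: "C2 \<in> components V E"
    and ne: "C1 \<noteq> C2" and odd: "odd (card (edges_on E C1))"
    and iso: "graph_iso C1 (edges_on E C1) C2 (edges_on E C2)"
  shows False
proof -
  obtain x1 where x1: "x1 \<in> V" and C1x: "C1 = cc x1" using comps_E[OF C1] by blast
  obtain x2 where x2: "x2 \<in> V" and C2x: "C2 = cc x2" using comps_E[OF C2] by blast
  obtain f where bij: "bij_betw f C1 C2"
    and fe0: "\<forall>u\<in>C1. \<forall>v\<in>C1. {u, v} \<in> edges_on E C1 \<longleftrightarrow> {f u, f v} \<in> edges_on E C2"
    using iso unfolding graph_iso_def by blast
  have fe: "\<forall>u\<in>C1. \<forall>v\<in>C1. ({u, v} \<in> E \<longleftrightarrow> {f u, f v} \<in> E)"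
  proof (intro ballI)
    fix u v assume u: "u \<in> C1" and v: "v \<in> C1"
    have "f u \<in> C2" "f v \<in> C2" using bij u v bij_betw_apply by metis+
    then show "{u, v} \<in> E \<longleftrightarrow> {f u, f v} \<in> E" using fe0 u v by (simp add: edges_on_def)
  qed
  define \<tau> where "\<tau> = (\<lambda>y. if y \<in> C1 then f y else if y \<in> C2 then inv_into C1 f y else y)"
  have sw: "graph_aut V E \<tau> \<and> (\<forall>y. \<tau> (\<tau> y) = y)
    \<and> (evenperm (edge_perm E \<tau>) \<longleftrightarrow> even (card (edges_on E C1)))
    \<and> card (edges_on E C2) = card (edges_on E C1)"
    using x1 x2 C1x C2x ne bij fe \<tau>_def by (rule swap)
  have "graph_aut V E \<tau>" using sw by simp
  then have "evenperm (edge_perm E \<tau>)" using inv unfolding invariant_graph_def by blast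
  then show False using sw odd by simp
qed

lemma rev:
  assumes A: "\<forall>C\<in>components V E. invariant_graph C (edges_on E C)"
    and B: "\<forall>C1\<in>components V E. \<forall>C2\<in>components V E.
        C1 \<noteq> C2 \<and> odd (card (edges_on E C1)) \<and> odd (card (edges_on E C2)) \<longrightarrow>
        \<not> graph_iso C1 (edges_on E C1) C2 (edges_on E C2)"
  shows "invariant_graph V E"
proof -
  have main: "\<forall>\<sigma>. graph_aut V E \<sigma> \<longrightarrow> card {y. \<sigma> y \<noteq> y} = n \<longrightarrow> evenperm (edge_perm E \<sigma>)" for n
  proof (induction n rule: less_induct)
    case (less n)
    show ?case
    proof (intro allI impI)
      fix \<sigma> assume a: "graph_aut V E \<sigma>" and cn: "card {y. \<sigma> y \<noteq> y} = n"
      have p: "\<sigma> permutes V" using a by (rule aut_perm)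
      have mvV: "{y. \<sigma> y \<noteq> y} \<subseteq> V" using p permutes_not_in by fastforce
      have finmv: "finite {y. \<sigma> y \<noteq> y}" using finite_subset[OF mvV finV] .
      have IH: "evenperm (edge_perm E \<sigma>')" if a': "graph_aut V E \<sigma>'"
        and sub: "{y. \<sigma>' y \<noteq> y} \<subset> {y. \<sigma> y \<noteq> y}" for \<sigma>'
      proof -
        have "card {y. \<sigma>' y \<noteq> y} < n" using psubset_card_mono[OF finmv sub] cn by simp
        then show ?thesis using less.IH a' by blast
      qed
      have injs: "inj \<sigma>" using p by (rule permutes_inj)
      show "evenperm (edge_perm E \<sigma>)"
      proof (cases "\<exists>x\<in>V. \<sigma> x \<notin> cc x")
        case True
        then obtain x where x: "x \<in> V" and sx: "\<sigma> x \<notin> cc x" by blast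
        define C where "C = cc x"
        define D where "D = cc (\<sigma> x)"
        have sxV: "\<sigma> x \<in> V" using p x permutes_in_image by metis
        have sxD: "\<sigma> x \<in> D" using sxV comp_self D_def by simp
        have xC: "x \<in> C" using x comp_self C_def by simp
        have ne: "C \<noteq> D" using sx sxD C_def by blast
        have disj: "C \<inter> D = {}" using ne unfolding C_def D_def by (rule comp_disj)
        have sC: "\<sigma> ` C = D" unfolding C_def D_def using a by (rule aut_comp_image)
        have "inj_on \<sigma> C" using inj_on_subset[OF injs subset_UNIV] .
        then have bij: "bij_betw \<sigma> C D" using sC by (simp add: bij_betw_def)
        have fe: "\<forall>u\<in>C. \<forall>v\<in>C. ({u, v} \<in> E \<longleftrightarrow> {\<sigma> u, \<sigma> v} \<in> E)"
        proof (intro ballI)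
          fix u v assume "u \<in> C" "v \<in> C"
          then have "u \<in> V" "v \<in> V" using comp_sub C_def by auto
          then show "{u, v} \<in> E \<longleftrightarrow> {\<sigma> u, \<sigma> v} \<in> E" using a by (simp add: graph_aut_def)
        qed
        define \<tau> where "\<tau> = (\<lambda>y. if y \<in> C then \<sigma> y else if y \<in> D then inv_into C \<sigma> y else y)"
        have sw: "graph_aut V E \<tau> \<and> (\<forall>y. \<tau> (\<tau> y) = y)
          \<and> (evenperm (edge_perm E \<tau>) \<longleftrightarrow> even (card (edges_on E C)))
          \<and> card (edges_on E D) = card (edges_on E C)"
          using x sxV C_def D_def ne bij fe \<tau>_def by (rule swap)
        have at: "graph_aut V E \<tau>" and tt: "\<forall>y. \<tau> (\<tau> y) = y" using sw by simp_all
        have iso: "graph_iso C (edges_on E C) D (edges_on E D)"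
          unfolding graph_iso_def
        proof (intro exI conjI ballI)
          show "bij_betw \<sigma> C D" by (rule bij)
          fix u v assume u: "u \<in> C" and v: "v \<in> C"
          have "\<sigma> u \<in> D" "\<sigma> v \<in> D" using u v sC by blast+
          then show "{u, v} \<in> edges_on E C \<longleftrightarrow> {\<sigma> u, \<sigma> v} \<in> edges_on E D"
            using fe u v by (simp add: edges_on_def)
        qed
        have evC: "even (card (edges_on E C))"
        proof (rule ccontr)
          assume o: "\<not> even (card (edges_on E C))"
          then have "odd (card (edges_on E D))" using sw by simp
          moreover have "C \<in> components V E" "D \<in> components V E"
            using x sxV C_def D_def comps_I by simp_all
          ultimately show False using B ne o iso by blast
        qed
        then have evt: "evenperm (edge_perm E \<tau>)" using sw by simp
        define \<sigma>2 where "\<sigma>2 = \<tau> \<circ> \<sigma>"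
        have a2: "graph_aut V E \<sigma>2" unfolding \<sigma>2_def using at a by (rule aut_o)
        have s_eq: "\<sigma> = \<tau> \<circ> \<sigma>2" unfolding \<sigma>2_def using tt by (simp add: fun_eq_iff)
        have sub: "{y. \<sigma>2 y \<noteq> y} \<subset> {y. \<sigma> y \<noteq> y}"
        proof
          show "{y. \<sigma>2 y \<noteq> y} \<subseteq> {y. \<sigma> y \<noteq> y}"
          proof
            fix y assume y: "y \<in> {y. \<sigma>2 y \<noteq> y}"
            show "y \<in> {y. \<sigma> y \<noteq> y}"
            proof (rule ccontr)
              assume "y \<notin> {y. \<sigma> y \<noteq> y}"
              then have fy: "\<sigma> y = y" by simp
              have yC: "y \<notin> C"
              proof
                assume "y \<in> C"
                then have "\<sigma> y \<in> D" using sC by blast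
                then show False using fy \<open>y \<in> C\<close> disj by auto
              qed
              have yD: "y \<notin> D"
              proof
                assume "y \<in> D"
                then obtain c where c: "c \<in> C" "y = \<sigma> c" using sC by blast
                then have "\<sigma> y = \<sigma> c" using fy by simp
                then have "y = c" using injs by (simp add: inj_eq)
                then show False using c yC by simp
              qed
              have "\<sigma>2 y = y" using fy yC yD by (simp add: \<sigma>2_def \<tau>_def)
              then show False using y by simp
            qed
          qed
          have sxC: "\<sigma> x \<notin> C" using sx C_def by simp
          have "\<sigma>2 x = inv_into C \<sigma> (\<sigma> x)" using sxC sxD by (simp add: \<sigma>2_def \<tau>_def)
          also have "\<dots> = x" using bij xC by (simp add: bij_betw_inv_into_left)
          finally have "\<sigma>2 x = x" .
          moreover have "\<sigma> x \<noteq> x" using sxC xC by auto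
          ultimately show "{y. \<sigma>2 y \<noteq> y} \<noteq> {y. \<sigma> y \<noteq> y}" by blast
        qed
        have ev2: "evenperm (edge_perm E \<sigma>2)" using a2 sub by (rule IH)
        have "edge_perm E \<sigma> = edge_perm E \<tau> \<circ> edge_perm E \<sigma>2"
          using s_eq edge_perm_o[OF a2, of \<tau>] by simp
        then show ?thesis
          using evenperm_comp[OF edge_perm_permutation[OF at] edge_perm_permutation[OF a2]] evt ev2
          by simp
      next
        case False
        then have inC: "\<sigma> y \<in> cc y" if "y \<in> V" for y using that by blast
        show ?thesis
        proof (cases "\<forall>y. \<sigma> y = y")
          case True
          then have "\<sigma> = id" by (simp add: fun_eq_iff)
          then show ?thesis using edge_perm_id by simp
        next
          case False
          then obtain x where sx: "\<sigma> x \<noteq> x" by blast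
          have x: "x \<in> V" using sx p permutes_not_in by metis
          define C where "C = cc x"
          have CV: "C \<subseteq> V" using comp_sub C_def by simp
          have xC: "x \<in> C" using x comp_self C_def by simp
          have sC: "\<sigma> y \<in> C" if "y \<in> C" for y
          proof -
            have "cc y = C" using that C_def comp_eq[of y x] by simp
            then show ?thesis using inC[of y] that CV by auto
          qed
          have dC: "cc y \<inter> C = {}" if "y \<in> V" "y \<notin> C" for y
            using comp_other[OF x that(1)] that(2) C_def by simp
          have sN: "\<sigma> y \<notin> C" if "y \<in> V" "y \<notin> C" for y
            using inC[OF that(1)] dC[OF that] by blast
          define \<rho> where "\<rho> = (\<lambda>y. if y \<in> C then \<sigma> y else y)"
          define \<sigma>1 where "\<sigma>1 = (\<lambda>y. if y \<in> C then y else \<sigma> y)"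
          have injr: "inj_on \<rho> C"
          proof (rule inj_onI)
            fix y z assume "y \<in> C" "z \<in> C" "\<rho> y = \<rho> z"
            then show "y = z" using injs by (simp add: \<rho>_def inj_eq)
          qed
          have pr: "\<rho> permutes C"
            using injr finite_subset[OF CV finV] by (rule inj_imp_permutes) (simp_all add: \<rho>_def sC)
          have prV: "\<rho> permutes V" using pr CV by (rule permutes_subset)
          have ar: "graph_aut V E \<rho>"
          proof (rule piecewise_aut[OF prV], intro ballI)
            fix y assume y: "y \<in> V"
            show "\<exists>g. graph_aut V E g \<and> (\<forall>z\<in>cc y. \<rho> z = g z)"
            proof (cases "y \<in> C")
              case True
              then have "cc y = C" using C_def comp_eq[of y x] by simp
              then have "\<forall>z\<in>cc y. \<rho> z = \<sigma> z" by (simp add: \<rho>_def)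
              then show ?thesis using a by blast
            next
              case False
              then have "\<forall>z\<in>cc y. \<rho> z = id z" using dC[OF y False] by (auto simp: \<rho>_def)
              then show ?thesis using aut_id by blast
            qed
          qed
          have inj1: "inj_on \<sigma>1 V"
          proof (rule inj_onI)
            fix y z assume y: "y \<in> V" and z: "z \<in> V" and e: "\<sigma>1 y = \<sigma>1 z"
            show "y = z"
            proof (cases "y \<in> C")
              case True
              show ?thesis
              proof (cases "z \<in> C")
                case True then show ?thesis using e \<open>y \<in> C\<close> by (simp add: \<sigma>1_def)
              next
                case False then show ?thesis using e \<open>y \<in> C\<close> sN[OF z False] by (simp add: \<sigma>1_def)
              qed
            next
              case F: False
              show ?thesis
              proof (cases "z \<in> C")
                case True then show ?thesis using e F sN[OF y F] by (simp add: \<sigma>1_def)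
              next
                case False then show ?thesis using e F injs by (simp add: \<sigma>1_def inj_eq)
              qed
            qed
          qed
          have p1: "\<sigma>1 permutes V"
          proof (rule inj_imp_permutes[OF inj1 finV])
            show "\<sigma>1 y \<in> V" if "y \<in> V" for y
              using that permutes_in_image[OF p, of y] by (simp add: \<sigma>1_def)
            show "\<sigma>1 y = y" if "y \<notin> V" for y
              using that CV p permutes_not_in by (auto simp: \<sigma>1_def)
          qed
          have a1: "graph_aut V E \<sigma>1"
          proof (rule piecewise_aut[OF p1], intro ballI)
            fix y assume y: "y \<in> V"
            show "\<exists>g. graph_aut V E g \<and> (\<forall>z\<in>cc y. \<sigma>1 z = g z)"
            proof (cases "y \<in> C")
              case True
              then have "cc y = C" using C_def comp_eq[of y x] by simp
              then have "\<forall>z\<in>cc y. \<sigma>1 z = id z" by (simp add: \<sigma>1_def)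
              then show ?thesis using aut_id by blast
            next
              case False
              then have "\<forall>z\<in>cc y. \<sigma>1 z = \<sigma> z" using dC[OF y False] by (auto simp: \<sigma>1_def)
              then show ?thesis using a by blast
            qed
          qed
          have s_eq: "\<sigma> = \<rho> \<circ> \<sigma>1"
          proof
            fix y show "\<sigma> y = (\<rho> \<circ> \<sigma>1) y"
            proof (cases "y \<in> C")
              case True then show ?thesis by (simp add: \<rho>_def \<sigma>1_def)
            next
              case False
              show ?thesis
              proof (cases "y \<in> V")
                case True then show ?thesis using sN[OF True False] False by (simp add: \<rho>_def \<sigma>1_def)
              next
                case nV: False
                then have "\<sigma> y = y" using p permutes_not_in by metis
                then show ?thesis using False by (simp add: \<rho>_def \<sigma>1_def)
              qed
            qed
          qed
          have sub: "{y. \<sigma>1 y \<noteq> y} \<subset> {y. \<sigma> y \<noteq> y}"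
          proof
            show "{y. \<sigma>1 y \<noteq> y} \<subseteq> {y. \<sigma> y \<noteq> y}" by (auto simp: \<sigma>1_def split: if_splits)
            have "\<sigma>1 x = x" using xC by (simp add: \<sigma>1_def)
            then show "{y. \<sigma>1 y \<noteq> y} \<noteq> {y. \<sigma> y \<noteq> y}" using sx by blast
          qed
          have ev1: "evenperm (edge_perm E \<sigma>1)" using a1 sub by (rule IH)
          have "C \<in> components V E" using x C_def comps_I by simp
          then have invC: "invariant_graph C (edges_on E C)" using A by blast
          have "graph_aut C (edges_on E C) \<rho>" using ar pr C_def by (rule restr_aut)
          then have "evenperm (edge_perm (edges_on E C) \<rho>)" using invC by (simp add: invariant_graph_def)
          moreover have "edge_perm E \<rho> = edge_perm (edges_on E C) \<rho>"
            using ar pr C_def x by (rule restr_edge_perm)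
          ultimately have evr: "evenperm (edge_perm E \<rho>)" by simp
          have "edge_perm E \<sigma> = edge_perm E \<rho> \<circ> edge_perm E \<sigma>1"
            using s_eq edge_perm_o[OF a1, of \<rho>] by simp
          then show ?thesis
            using evenperm_comp[OF edge_perm_permutation[OF ar] edge_perm_permutation[OF a1]] evr ev1
            by simp
        qed
      qed
    qed
  qed
  show ?thesis unfolding invariant_graph_def using main by blast
qed

end

theorem lemma2p10:
  fixes V :: "'a set" and E :: "'a set set"
  assumes "simple_graph V E"
  shows "invariant_graph V E \<longleftrightarrow>
    ((\<forall>C\<in>components V E. invariant_graph C (edges_on E C)) \<and>
     (\<forall>C1\<in>components V E. \<forall>C2\<in>components V E.
        C1 \<noteq> C2 \<and> odd (card (edges_on E C1)) \<and> odd (card (edges_on E C2)) \<longrightarrow>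
        \<not> graph_iso C1 (edges_on E C1) C2 (edges_on E C2)))"
proof -
  interpret sg V E using assms by (rule sg.intro)
  show ?thesis
  proof
    assume inv: "invariant_graph V E"
    show "(\<forall>C\<in>components V E. invariant_graph C (edges_on E C)) \<and>
     (\<forall>C1\<in>components V E. \<forall>C2\<in>components V E.
        C1 \<noteq> C2 \<and> odd (card (edges_on E C1)) \<and> odd (card (edges_on E C2)) \<longrightarrow>
        \<not> graph_iso C1 (edges_on E C1) C2 (edges_on E C2))"
      using fwd_a[OF inv] fwd_b[OF inv] by blast
  next
    assume h: "(\<forall>C\<in>components V E. invariant_graph C (edges_on E C)) \<and>
     (\<forall>C1\<in>components V E. \<forall>C2\<in>components V E.
        C1 \<noteq> C2 \<and> odd (card (edges_on E C1)) \<and> odd (card (edges_on E C2)) \<longrightarrow>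
        \<not> graph_iso C1 (edges_on E C1) C2 (edges_on E C2))"
    show "invariant_graph V E" using rev h by blast
  qed
qed

end
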